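(* Let $\Omega$ be a commutative adic $\mathbb{Z}_\ell$-algebra, $\mathbb{F}$ a finite field, $k$ an integer prime to $\ell$, and $\gamma$ the image of the geometric Frobenius $\mathrm{Frob}_{\mathbb{F}}$ in $\Gamma_{k\ell^\infty}$. Let $P=\{f(T)\in\Omega[T]:f(0)\in\Omega^\times\}$ and $S=\{f\in\Omega[[\Gamma_{k\ell^\infty}]]:$ the image of $f$ in $\Omega/\mathrm{Jac}(\Omega)[[\Gamma_{k\ell^\infty}]]$ is a nonzerodivisor$\}$. Then the ring homomorphism $\Omega[T]\to\Omega[[\Gamma_{k\ell^\infty}]]$, $T\mapsto\gamma^{-1}$, maps $P$ into $S$.
   Context: Adic ring $\Omega$: $\mathrm{Jac}(\Omega)^n$ has finite index for all $n\ge1$ and $\Omega=\varprojlim\Omega/\mathrm{Jac}(\Omega)^n$. With $q=|\mathbb{F}|$, $\Gamma_{k\ell^\infty}=\mathrm{Gal}(\bigcup_n\mathbb{F}_{q^{k\ell^n}}/\mathbb{F})\cong\mathbb{Z}/k\times\mathbb{Z}_\ell$; $\mathrm{Frob}_{\mathbb{F}}$ is the automorphism $x\mapsto x^{1/q}$. $\Omega[[\Gamma]]=\varprojlim_{J,U}\Omega/J[\Gamma/U]$. *)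

theory Defs
  imports "HOL-Computational_Algebra.Polynomial" "HOL-Computational_Algebra.Primes"
begin

definition is_ideal :: "'a::comm_ring_1 set \<Rightarrow> bool" where
  "is_ideal I \<longleftrightarrow> 0 \<in> I \<and> (\<forall>x\<in>I. \<forall>y\<in>I. x + y \<in> I) \<and> (\<forall>r. \<forall>x\<in>I. r * x \<in> I)"

definition maximal_ideal :: "'a::comm_ring_1 set \<Rightarrow> bool" where
  "maximal_ideal I \<longleftrightarrow> is_ideal I \<and> 1 \<notin> I \<and>
     (\<forall>J. is_ideal J \<and> I \<subseteq> J \<longrightarrow> J = I \<or> 1 \<in> J)"

definition jac :: "'a::comm_ring_1 set" where
  "jac = \<Inter>{I. maximal_ideal I}"

definition ideal_gen :: "'a::comm_ring_1 set \<Rightarrow> 'a set" where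
  "ideal_gen X = \<Inter>{I. is_ideal I \<and> X \<subseteq> I}"

definition ideal_prod :: "'a::comm_ring_1 set \<Rightarrow> 'a set \<Rightarrow> 'a set" where
  "ideal_prod I J = ideal_gen {x * y |x y. x \<in> I \<and> y \<in> J}"

fun ideal_power :: "'a::comm_ring_1 set \<Rightarrow> nat \<Rightarrow> 'a set" where
  "ideal_power I 0 = UNIV"
| "ideal_power I (Suc n) = ideal_prod I (ideal_power I n)"

definition finite_index :: "'a::comm_ring_1 set \<Rightarrow> bool" where
  "finite_index I \<longleftrightarrow> finite ((\<lambda>x. (+) x ` I) ` UNIV)"

text \<open>Adic ring: Jac^n of finite index for n \<ge> 1, and the canonical map
  Omega -> lim Omega/Jac^n is bijective (separated and complete).\<close>
definition adic_ring :: "'a::comm_ring_1 itself \<Rightarrow> bool" where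
  "adic_ring _ \<longleftrightarrow>
     (\<forall>n\<ge>1. finite_index (ideal_power (jac::'a set) n)) \<and>
     (\<Inter>n. ideal_power (jac::'a set) n) = {0} \<and>
     (\<forall>a::nat \<Rightarrow> 'a. (\<forall>n. a (Suc n) - a n \<in> ideal_power jac n) \<longrightarrow>
        (\<exists>x. \<forall>n. x - a n \<in> ideal_power jac n))"

text \<open>Z_l = lim Z/l^n, elements as compatible sequences of residues.\<close>
definition zl_carrier :: "nat \<Rightarrow> (nat \<Rightarrow> int) set" where
  "zl_carrier l = {a. \<forall>n. 0 \<le> a n \<and> a n < int l ^ n \<and> a (Suc n) mod int l ^ n = a n}"

definition zl_add :: "nat \<Rightarrow> (nat \<Rightarrow> int) \<Rightarrow> (nat \<Rightarrow> int) \<Rightarrow> nat \<Rightarrow> int" where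
  "zl_add l a b = (\<lambda>n. (a n + b n) mod int l ^ n)"

definition zl_mul :: "nat \<Rightarrow> (nat \<Rightarrow> int) \<Rightarrow> (nat \<Rightarrow> int) \<Rightarrow> nat \<Rightarrow> int" where
  "zl_mul l a b = (\<lambda>n. (a n * b n) mod int l ^ n)"

definition zl_one :: "nat \<Rightarrow> nat \<Rightarrow> int" where
  "zl_one l = (\<lambda>n. 1 mod int l ^ n)"

definition zl_algebra :: "nat \<Rightarrow> 'a::comm_ring_1 itself \<Rightarrow> bool" where
  "zl_algebra l _ \<longleftrightarrow> (\<exists>\<phi> :: (nat \<Rightarrow> int) \<Rightarrow> 'a.
     \<phi> (zl_one l) = 1 \<and>
     (\<forall>a\<in>zl_carrier l. \<forall>b\<in>zl_carrier l.
        \<phi> (zl_add l a b) = \<phi> a + \<phi> b \<and> \<phi> (zl_mul l a b) = \<phi> a * \<phi> b))"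

definition lev :: "nat \<Rightarrow> nat \<Rightarrow> nat \<Rightarrow> nat" where
  "lev k l n = k * l ^ n"

text \<open>Gamma_{k l^\<infinity>}: compatible residues; Gal(F_{q^N}/F) = Z/N with the
  arithmetic Frobenius x \<mapsto> x^q corresponding to 1.\<close>
definition Gamma_set :: "nat \<Rightarrow> nat \<Rightarrow> (nat \<Rightarrow> nat) set" where
  "Gamma_set k l = {g. \<forall>n. g n < lev k l n \<and> g (Suc n) mod lev k l n = g n}"

text \<open>Image of the geometric Frobenius x \<mapsto> x^(1/q), i.e. -1.\<close>
definition frob_geom :: "nat \<Rightarrow> nat \<Rightarrow> nat \<Rightarrow> nat" where
  "frob_geom k l = (\<lambda>n. (lev k l n - 1) mod lev k l n)"

definition gam_inv :: "nat \<Rightarrow> nat \<Rightarrow> (nat \<Rightarrow> nat) \<Rightarrow> nat \<Rightarrow> nat" where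
  "gam_inv k l g = (\<lambda>n. (lev k l n - g n) mod lev k l n)"

text \<open>Group ring Omega[Z/N]: functions supported on {0..<N}.\<close>
definition supported :: "nat \<Rightarrow> (nat \<Rightarrow> 'a::zero) \<Rightarrow> bool" where
  "supported N x \<longleftrightarrow> (\<forall>i\<ge>N. x i = 0)"

definition gr_mul :: "nat \<Rightarrow> (nat \<Rightarrow> 'a::comm_ring_1) \<Rightarrow> (nat \<Rightarrow> 'a) \<Rightarrow> nat \<Rightarrow> 'a" where
  "gr_mul N a b = (\<lambda>i. if i < N then (\<Sum>j<N. a j * b ((N + i - j) mod N)) else 0)"

definition gr_delta :: "nat \<Rightarrow> nat \<Rightarrow> nat \<Rightarrow> 'a::comm_ring_1" where
  "gr_delta N m = (\<lambda>i. if i = m mod N then 1 else 0)"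

definition gr_proj :: "nat \<Rightarrow> nat \<Rightarrow> (nat \<Rightarrow> 'a::comm_ring_1) \<Rightarrow> nat \<Rightarrow> 'a" where
  "gr_proj N M x = (\<lambda>i. if i < M then (\<Sum>j\<in>{j. j < N \<and> j mod M = i}. x j) else 0)"

definition gr_eval :: "nat \<Rightarrow> 'a::comm_ring_1 poly \<Rightarrow> nat \<Rightarrow> nat \<Rightarrow> 'a" where
  "gr_eval N f g = (\<lambda>i. \<Sum>d\<le>degree f. coeff f d * gr_delta N (d * g) i)"

text \<open>Omega[[Gamma]] = lim_{J,U} Omega/J[Gamma/U], computed along the cofinal system
  (Jac^(n+1), ker(Gamma -> Z/(k l^n))); elements are families of representatives.\<close>
definition iwasawa :: "nat \<Rightarrow> nat \<Rightarrow> (nat \<Rightarrow> nat \<Rightarrow> 'a::comm_ring_1) set" where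
  "iwasawa k l = {x. \<forall>n. supported (lev k l n) (x n) \<and>
      (\<forall>i < lev k l n. gr_proj (lev k l (Suc n)) (lev k l n) (x (Suc n)) i - x n i
           \<in> ideal_power jac (Suc n))}"

text \<open>(Omega/Jac)[[Gamma]] = lim_n (Omega/Jac)[Z/(k l^n)] (Omega/Jac is finite, discrete),
  elements represented by Omega-valued families modulo Jac.\<close>
definition red_iwasawa :: "nat \<Rightarrow> nat \<Rightarrow> (nat \<Rightarrow> nat \<Rightarrow> 'a::comm_ring_1) set" where
  "red_iwasawa k l = {y. \<forall>n. supported (lev k l n) (y n) \<and>
      (\<forall>i < lev k l n. gr_proj (lev k l (Suc n)) (lev k l n) (y (Suc n)) i - y n i \<in> jac)}"

definition red_zero :: "nat \<Rightarrow> nat \<Rightarrow> (nat \<Rightarrow> nat \<Rightarrow> 'a::comm_ring_1) \<Rightarrow> bool" where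
  "red_zero k l y \<longleftrightarrow> (\<forall>n. \<forall>i < lev k l n. y n i \<in> jac)"

definition P_set :: "'a::comm_ring_1 poly set" where
  "P_set = {f. coeff f 0 dvd 1}"

definition S_set :: "nat \<Rightarrow> nat \<Rightarrow> (nat \<Rightarrow> nat \<Rightarrow> 'a::comm_ring_1) set" where
  "S_set k l = {x \<in> iwasawa k l. \<forall>y \<in> red_iwasawa k l.
      red_zero k l (\<lambda>n. gr_mul (lev k l n) (x n) (y n)) \<longrightarrow> red_zero k l y}"

definition poly_to_iwasawa :: "nat \<Rightarrow> nat \<Rightarrow> 'a::comm_ring_1 poly \<Rightarrow> nat \<Rightarrow> nat \<Rightarrow> 'a" where
  "poly_to_iwasawa k l f = (\<lambda>n. gr_eval (lev k l n) f (gam_inv k l (frob_geom k l) n))"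

end

theory Submission
  imports Defs "HOL-Number_Theory.Number_Theory"
begin

lemma id_zero: "is_ideal M \<Longrightarrow> 0 \<in> M" by (simp add: is_ideal_def)
lemma id_add: "is_ideal M \<Longrightarrow> x \<in> M \<Longrightarrow> y \<in> M \<Longrightarrow> x + y \<in> M" by (simp add: is_ideal_def)
lemma id_mult: "is_ideal M \<Longrightarrow> x \<in> M \<Longrightarrow> r * x \<in> M" by (simp add: is_ideal_def)
lemma id_mult2: "is_ideal M \<Longrightarrow> x \<in> M \<Longrightarrow> x * r \<in> M" using id_mult[of M x r] by (simp add: mult.commute)
lemma id_neg: "is_ideal M \<Longrightarrow> x \<in> M \<Longrightarrow> - x \<in> M" using id_mult[of M x "-1"] by simp
lemma id_diff: "is_ideal M \<Longrightarrow> x \<in> M \<Longrightarrow> y \<in> M \<Longrightarrow> x - y \<in> M"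
  using id_add[of M x "-y"] id_neg[of M y] by simp
lemma id_sum: "is_ideal M \<Longrightarrow> (\<And>i. i \<in> A \<Longrightarrow> g i \<in> M) \<Longrightarrow> sum g A \<in> M"
proof (induction A rule: infinite_finite_induct)
  case (infinite A) then show ?case by (simp add: id_zero)
next
  case empty then show ?case by (simp add: id_zero)
next
  case (insert x F) then show ?case by (simp add: id_add)
qed
lemma id_swap: "is_ideal M \<Longrightarrow> x - y \<in> M \<Longrightarrow> y - x \<in> M"
  using id_neg[of M "x - y"] by simp
lemma id_trans: "is_ideal M \<Longrightarrow> x - y \<in> M \<Longrightarrow> y - z \<in> M \<Longrightarrow> x - z \<in> M"
  using id_add[of M "x - y" "y - z"] by simp

lemma max_prime:
  assumes "maximal_ideal M" "x * y \<in> M" "x \<notin> M" shows "y \<in> M"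
proof -
  have M: "is_ideal M" using assms(1) by (simp add: maximal_ideal_def)
  define J where "J = {mm + r * x |mm r. mm \<in> M}"
  have "is_ideal J" unfolding is_ideal_def J_def
  proof (intro conjI ballI allI)
    show "0 \<in> {mm + r * x |mm r. mm \<in> M}" using id_zero[OF M] by (intro CollectI exI[of _ 0]) auto
  next
    fix a b assume "a \<in> {mm + r * x |mm r. mm \<in> M}" "b \<in> {mm + r * x |mm r. mm \<in> M}"
    then obtain m1 r1 m2 r2 where "a = m1 + r1 * x" "b = m2 + r2 * x" "m1 \<in> M" "m2 \<in> M" by auto
    then show "a + b \<in> {mm + r * x |mm r. mm \<in> M}"
      by (intro CollectI exI[of _ "m1 + m2"] exI[of _ "r1 + r2"]) (auto simp: id_add[OF M] algebra_simps)
  next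
    fix s a assume "a \<in> {mm + r * x |mm r. mm \<in> M}"
    then obtain m1 r1 where "a = m1 + r1 * x" "m1 \<in> M" by auto
    then have "s * a = s * m1 + (s * r1) * x" by (simp add: algebra_simps)
    then show "s * a \<in> {mm + r * x |mm r. mm \<in> M}"
      using id_mult[OF M \<open>m1 \<in> M\<close>, of s] by blast
  qed
  moreover have "M \<subseteq> J" unfolding J_def
  proof
    fix z assume "z \<in> M" then show "z \<in> {mm + r * x |mm r. mm \<in> M}" by (intro CollectI exI[of _ z] exI[of _ 0]) auto
  qed
  moreover have "x \<in> J" unfolding J_def using id_zero[OF M] by (intro CollectI exI[of _ 0] exI[of _ 1]) auto
  ultimately have "1 \<in> J" using assms(1,3) unfolding maximal_ideal_def by blast
  then obtain mm r where "1 = mm + r * x" "mm \<in> M" unfolding J_def by auto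
  then have "y = mm * y + r * (x * y)" by (metis mult_1 distrib_right mult.assoc)
  then show ?thesis using id_add[OF M] id_mult2[OF M \<open>mm \<in> M\<close>] id_mult[OF M assms(2)] by metis
qed

lemma max_prime_pow:
  assumes "maximal_ideal M" "x ^ a \<in> M" shows "x \<in> M"
  using assms(2)
proof (induction a)
  case 0 then show ?case using assms(1) by (simp add: maximal_ideal_def)
next
  case (Suc a) then show ?case using max_prime[OF assms(1), of x "x ^ a"] by auto
qed

lemma jac_sub: "maximal_ideal M \<Longrightarrow> jac \<subseteq> M" unfolding jac_def by auto

lemma fin_res:
  assumes "adic_ring TYPE('a::comm_ring_1)" "maximal_ideal (M::'a set)"
  shows "\<exists>R. finite R \<and> (\<forall>x. \<exists>r\<in>R. x - r \<in> M)"
proof -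
  have M: "is_ideal M" using assms(2) by (simp add: maximal_ideal_def)
  define I where "I = ideal_power (jac::'a set) 1"
  have fi: "finite_index I" using assms(1) unfolding adic_ring_def I_def by auto
  have "{x * y |x y. x \<in> jac \<and> y \<in> UNIV} \<subseteq> M" using jac_sub[OF assms(2)] id_mult2[OF M] by blast
  then have IM: "I \<subseteq> M" unfolding I_def by (auto simp: ideal_prod_def ideal_gen_def intro: M)
  define C where "C = (\<lambda>x. (+) x ` I) ` UNIV"
  have "finite C" using fi unfolding finite_index_def C_def by simp
  define R where "R = (\<lambda>c. SOME z. z \<in> c) ` C"
  have "finite R" using \<open>finite C\<close> unfolding R_def by simp
  moreover have "\<forall>x. \<exists>r\<in>R. x - r \<in> M"
  proof
    fix x
    have "0 \<in> I" unfolding I_def by (auto simp: ideal_prod_def ideal_gen_def is_ideal_def)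
    then have "x \<in> (+) x ` I" by force
    then have "(SOME z. z \<in> (+) x ` I) \<in> (+) x ` I" by (rule someI)
    then obtain i where i: "i \<in> I" "(SOME z. z \<in> (+) x ` I) = x + i" by auto
    have "(SOME z. z \<in> (+) x ` I) \<in> R" unfolding R_def C_def by auto
    moreover have "x - (x + i) \<in> M" using id_neg[OF M] i(1) IM by auto
    ultimately show "\<exists>r\<in>R. x - r \<in> M" using i by metis
  qed
  ultimately show ?thesis by blast
qed

lemma ell_decomp:
  fixes c l :: nat assumes "0 < c" "prime l" shows "\<exists>a b. c = l ^ a * b \<and> \<not> l dvd b"
  using assms(1)
proof (induction c rule: less_induct)
  case (less c)
  show ?case
  proof (cases "l dvd c")
    case True
    then obtain c' where c': "c = l * c'" by auto
    have "l > 1" using assms(2) prime_gt_1_nat by blast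
    then have "c' < c" "0 < c'" using less.prems c' by auto
    then obtain a b where "c' = l ^ a * b" "\<not> l dvd b" using less.IH by blast
    then show ?thesis using c' by (intro exI[of _ "Suc a"] exI[of _ b]) auto
  next
    case False then show ?thesis by (intro exI[of _ 0] exI[of _ c]) auto
  qed
qed

definition zseq :: "nat \<Rightarrow> nat \<Rightarrow> nat \<Rightarrow> int" where
  "zseq l t = (\<lambda>n. int t mod int l ^ n)"

lemma zseq_carrier: "l > 0 \<Longrightarrow> zseq l t \<in> zl_carrier l"
  unfolding zseq_def zl_carrier_def
  by (auto simp: mod_mod_cancel le_imp_power_dvd)

lemma zseq_suc: "zl_add l (zseq l t) (zl_one l) = zseq l (Suc t)"
  unfolding zseq_def zl_add_def zl_one_def by (auto simp: mod_add_eq add.commute)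

lemma zl_hom_nat:
  assumes "l > 0" "\<phi> (zl_one l) = (1::'a::comm_ring_1)"
    "\<forall>a\<in>zl_carrier l. \<forall>b\<in>zl_carrier l. \<phi> (zl_add l a b) = \<phi> a + \<phi> b"
  shows "\<phi> (zseq l t) = of_nat t"
proof (induction t)
  case 0
  have "zl_add l (zseq l 0) (zseq l 0) = zseq l 0" unfolding zseq_def zl_add_def by simp
  moreover have "\<phi> (zl_add l (zseq l 0) (zseq l 0)) = \<phi> (zseq l 0) + \<phi> (zseq l 0)" using assms(3) zseq_carrier[OF assms(1), of 0] by blast
  ultimately have "\<phi> (zseq l 0) = \<phi> (zseq l 0) + \<phi> (zseq l 0)" by simp
  then show ?case by simp
next
  case (Suc t)
  have "zl_one l \<in> zl_carrier l" using zseq_carrier[OF assms(1), of 1] unfolding zseq_def zl_one_def by simp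
  then have "\<phi> (zl_add l (zseq l t) (zl_one l)) = \<phi> (zseq l t) + 1" using assms zseq_carrier[OF assms(1), of t] by simp
  then have "\<phi> (zseq l (Suc t)) = \<phi> (zseq l t) + 1" by (simp only: zseq_suc)
  then show ?case using Suc by simp
qed

definition zinv :: "nat \<Rightarrow> nat \<Rightarrow> nat \<Rightarrow> int" where
  "zinv l b = (\<lambda>n. int (SOME r. r < l ^ n \<and> [b * r = 1] (mod l ^ n)))"

lemma zinv_ex:
  fixes l b :: nat
  assumes "prime l" "\<not> l dvd b"
  shows "\<exists>r. r < l ^ n \<and> [b * r = 1] (mod l ^ n)"
proof -
  have "coprime b l" using assms prime_imp_coprime coprime_commute by blast
  then have "coprime b (l ^ n)" by simp
  then obtain x where x: "[b * x = Suc 0] (mod l ^ n)" using cong_solve_coprime_nat by blast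
  have "l ^ n > 0" using assms(1) prime_gt_0_nat by simp
  then have "x mod l ^ n < l ^ n" by simp
  moreover have "[b * (x mod l ^ n) = 1] (mod l ^ n)" using x
    unfolding cong_def by (simp add: mod_mult_right_eq)
  ultimately show ?thesis by blast
qed

lemma zinv_prop:
  fixes l b :: nat
  assumes "prime l" "\<not> l dvd b"
  shows "(SOME r. r < l ^ n \<and> [b * r = 1] (mod l ^ n)) < l ^ n \<and>
         [b * (SOME r. r < l ^ n \<and> [b * r = 1] (mod l ^ n)) = 1] (mod l ^ n)"
  using someI_ex[OF zinv_ex[OF assms, of n]] .

lemma inv_unique:
  fixes l b :: nat
  assumes "prime l" "\<not> l dvd b" "r1 < l ^ n" "r2 < l ^ n" "[b * r1 = 1] (mod l ^ n)" "[b * r2 = 1] (mod l ^ n)"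
  shows "r1 = r2"
proof -
  have "coprime b l" using assms prime_imp_coprime coprime_commute by blast
  then have "coprime b (l ^ n)" by simp
  have "[b * r1 = b * r2] (mod l ^ n)" using assms(5,6) by (meson cong_sym cong_trans)
  then have "[r1 = r2] (mod l ^ n)" using cong_mult_lcancel_nat \<open>coprime b (l ^ n)\<close> by blast
  then show ?thesis using cong_less_modulus_unique_nat assms(3,4) by blast
qed

lemma zinv_carrier:
  assumes "prime l" "\<not> l dvd b" shows "zinv l b \<in> zl_carrier l"
  unfolding zl_carrier_def
proof (intro CollectI allI conjI)
  fix n
  let ?r = "\<lambda>n. SOME r. r < l ^ n \<and> [b * r = 1] (mod l ^ n)"
  have p: "\<And>n. ?r n < l ^ n \<and> [b * ?r n = 1] (mod l ^ n)" using zinv_prop[OF assms] by blast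
  show "0 \<le> zinv l b n" unfolding zinv_def by simp
  have "int (?r n) < int (l ^ n)" using p[of n] by (simp only: of_nat_less_iff)
  then show "zinv l b n < int l ^ n" unfolding zinv_def by simp
  have "l ^ n > 0" using assms(1) prime_gt_0_nat by simp
  have dv: "l ^ n dvd l ^ Suc n" by simp
  have "[b * ?r (Suc n) = 1] (mod l ^ n)" using cong_dvd_modulus_nat[OF conjunct2[OF p[of "Suc n"]] dv] .
  then have h: "[b * (?r (Suc n) mod l ^ n) = 1] (mod l ^ n)"
    unfolding cong_def by (simp add: mod_mult_right_eq)
  have c1: "?r (Suc n) mod l ^ n < l ^ n" using \<open>l ^ n > 0\<close> by (rule mod_less_divisor)
  have c2: "?r n < l ^ n" using p[of n] by (rule conjunct1)
  have c3: "[b * ?r n = 1] (mod l ^ n)" using p[of n] by (rule conjunct2)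
  have "?r (Suc n) mod l ^ n = ?r n" by (rule inv_unique[OF assms c1 c2 h c3])
  then have "int (?r (Suc n) mod l ^ n) = int (?r n)" by simp
  then show "zinv l b (Suc n) mod int l ^ n = zinv l b n"
    unfolding zinv_def by (simp add: zmod_int)
qed

lemma pig_pair:
  assumes "finite R" "f ` A \<subseteq> R" "card A > card R"
  shows "\<exists>x\<in>A. \<exists>y\<in>A. x \<noteq> y \<and> f x = f y"
proof (rule ccontr)
  assume "\<not> ?thesis"
  then have "inj_on f A" unfolding inj_on_def by blast
  then have "card A \<le> card R" using card_inj_on_le assms by blast
  then show False using assms(3) by simp
qed

lemma cl_ex:
  assumes "finite R" "\<forall>x. \<exists>r\<in>R. x - r \<in> M"
  shows "(SOME r. r \<in> R \<and> x - r \<in> M) \<in> R \<and> x - (SOME r. r \<in> R \<and> x - r \<in> M) \<in> M"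
  using someI_ex[of "\<lambda>r. r \<in> R \<and> x - r \<in> M"] assms(2) by blast

lemma zl_mul_inv:
  fixes l b :: nat
  assumes "prime l" "\<not> l dvd b"
  shows "zl_mul l (zseq l b) (zinv l b) = zl_one l"
proof
  fix n
  let ?r = "SOME r. r < l ^ n \<and> [b * r = 1] (mod l ^ n)"
  have c: "[b * ?r = 1] (mod l ^ n)" using zinv_prop[OF assms] by blast
  have "zl_mul l (zseq l b) (zinv l b) n = (int b mod int l ^ n * int ?r) mod int l ^ n"
    unfolding zl_mul_def zseq_def zinv_def by simp
  also have "\<dots> = (int b * int ?r) mod int l ^ n" by (simp add: mod_mult_left_eq)
  also have "\<dots> = int ((b * ?r) mod l ^ n)" by (simp add: zmod_int)
  also have "\<dots> = int (1 mod l ^ n)" using c unfolding cong_def by simp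
  also have "\<dots> = zl_one l n" unfolding zl_one_def using zmod_int[of 1 "l ^ n"] by simp
  finally show "zl_mul l (zseq l b) (zinv l b) n = zl_one l n" .
qed

lemma ell_in_M:
  fixes l :: nat
  assumes l: "prime l" and ad: "adic_ring TYPE('a::comm_ring_1)" and za: "zl_algebra l TYPE('a)"
    and mx: "maximal_ideal (M::'a set)"
  shows "(of_nat l :: 'a) \<in> M"
proof -
  have M: "is_ideal M" using mx by (simp add: maximal_ideal_def)
  obtain R where R: "finite R" "\<forall>x. \<exists>r\<in>R. x - r \<in> M" using fin_res[OF ad mx] by blast
  define cl where "cl x = (SOME r. r \<in> R \<and> x - r \<in> M)" for x :: 'a
  have cl: "cl x \<in> R" "x - cl x \<in> M" for x using cl_ex[OF R, of x] unfolding cl_def by auto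
  have "\<exists>x\<in>{0..card R}. \<exists>y\<in>{0..card R}. x \<noteq> y \<and> cl (of_nat x) = cl (of_nat y)"
    by (rule pig_pair[OF R(1)]) (use cl in auto)
  then obtain t1 t2 where t: "t1 \<noteq> t2" "cl (of_nat t1) = cl (of_nat t2)" by blast
  have "\<exists>c. c > 0 \<and> (of_nat c :: 'a) \<in> M"
  proof (cases "t1 < t2")
    case True
    have "of_nat t2 - cl (of_nat t1) \<in> M" using cl(2)[of "of_nat t2"] t(2) by simp
    then have "of_nat t2 - of_nat t1 \<in> M"
      using id_trans[OF M _ id_swap[OF M cl(2)[of "of_nat t1"]]] by blast
    then show ?thesis using True by (intro exI[of _ "t2 - t1"]) (simp add: of_nat_diff)
  next
    case False
    then have "t2 < t1" using t(1) by simp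
    have "of_nat t1 - cl (of_nat t2) \<in> M" using cl(2)[of "of_nat t1"] t(2) by simp
    then have "of_nat t1 - of_nat t2 \<in> M"
      using id_trans[OF M _ id_swap[OF M cl(2)[of "of_nat t2"]]] by blast
    then show ?thesis using \<open>t2 < t1\<close> by (intro exI[of _ "t1 - t2"]) (simp add: of_nat_diff)
  qed
  then obtain c where c: "c > 0" "(of_nat c :: 'a) \<in> M" by blast
  obtain a b where ab: "c = l ^ a * b" "\<not> l dvd b" using ell_decomp[OF c(1) l] by blast
  obtain \<phi> :: "(nat \<Rightarrow> int) \<Rightarrow> 'a" where
    ph: "\<phi> (zl_one l) = 1" "\<forall>a\<in>zl_carrier l. \<forall>b\<in>zl_carrier l.
        \<phi> (zl_add l a b) = \<phi> a + \<phi> b \<and> \<phi> (zl_mul l a b) = \<phi> a * \<phi> b"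
    using za unfolding zl_algebra_def by blast
  have l0: "l > 0" using l prime_gt_0_nat by blast
  have phn: "\<phi> (zseq l b) = of_nat b" by (rule zl_hom_nat[where \<phi>=\<phi>, OF l0 ph(1)]) (use ph(2) in blast)
  have "\<phi> (zl_mul l (zseq l b) (zinv l b)) = \<phi> (zseq l b) * \<phi> (zinv l b)"
    using ph(2) zseq_carrier[OF l0] zinv_carrier[OF l ab(2)] by blast
  then have u: "of_nat b * \<phi> (zinv l b) = 1" using zl_mul_inv[OF l ab(2)] ph(1) phn by simp
  have "of_nat c * \<phi> (zinv l b) = (of_nat l :: 'a) ^ a * (of_nat b * \<phi> (zinv l b))"
    using ab(1) by (simp add: mult.assoc)
  then have "(of_nat l :: 'a) ^ a = of_nat c * \<phi> (zinv l b)" using u by simp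
  then have "(of_nat l :: 'a) ^ a \<in> M" using id_mult2[OF M c(2)] by simp
  then show ?thesis using max_prime_pow[OF mx] by blast
qed

lemma per_mult: fixes x c N :: nat shows "(\<forall>u. Y (u + N) = Y u) \<Longrightarrow> Y (x + c * N) = Y x"
proof (induction c)
  case 0 then show ?case by simp
next
  case (Suc c)
  have "Y (x + Suc c * N) = Y ((x + c * N) + N)" by (simp add: algebra_simps)
  then show ?case using Suc by simp
qed

lemma shift_iter:
  fixes j t \<delta> :: nat and Y :: "nat \<Rightarrow> 'a::comm_ring_1"
  assumes M: "is_ideal M" and sh: "\<forall>j. Y (j + \<delta>) - Y j \<in> M"
  shows "Y (j + t * \<delta>) - Y j \<in> M"
proof (induction t)
  case 0 then show ?case using id_zero[OF M] by simp
next
  case (Suc t)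
  have "Y ((j + t * \<delta>) + \<delta>) - Y (j + t * \<delta>) \<in> M" using sh by blast
  then have "Y (j + Suc t * \<delta>) - Y (j + t * \<delta>) \<in> M" by (simp add: algebra_simps)
  then show ?case using id_trans[OF M _ Suc] by blast
qed

lemma core_shift:
  fixes Y a :: "nat \<Rightarrow> 'a::comm_ring_1"
  assumes M: "is_ideal M" and R: "finite R" "\<forall>x. \<exists>r\<in>R. x - r \<in> M"
    and a0: "a 0 * a0' = 1" and N: "N > 0" and per: "\<forall>u. Y (u + N) = Y u"
    and rec: "\<forall>u\<ge>m. (\<Sum>d\<le>m. a d * Y (u - d)) \<in> M"
  shows "\<exists>\<delta>. 0 < \<delta> \<and> \<delta> \<le> card R ^ m \<and> (\<forall>j. Y (j + \<delta>) - Y j \<in> M)"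
proof -
  define st where "st u v \<longleftrightarrow> (\<forall>d\<in>{1..m}. Y (u - d) - Y (v - d) \<in> M)" for u v
  have A: "Y u - Y v \<in> M" if "u \<ge> m" "v \<ge> m" "st u v" for u v
  proof -
    have split: "(\<Sum>d\<le>m. a d * Y (w - d)) = a 0 * Y w + (\<Sum>d\<in>{1..m}. a d * Y (w - d))" for w
    proof -
      have "{..m} = insert 0 {1..m}" by auto
      then show ?thesis by simp
    qed
    have "a 0 * (Y u - Y v) = (\<Sum>d\<le>m. a d * Y (u - d)) - (\<Sum>d\<le>m. a d * Y (v - d))
        - (\<Sum>d\<in>{1..m}. a d * (Y (u - d) - Y (v - d)))"
      unfolding split by (simp add: algebra_simps sum_subtractf)
    moreover have "(\<Sum>d\<in>{1..m}. a d * (Y (u - d) - Y (v - d))) \<in> M"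
      using that(3) unfolding st_def by (intro id_sum[OF M] id_mult[OF M]) auto
    ultimately have "a 0 * (Y u - Y v) \<in> M" using rec that(1,2) id_diff[OF M] by simp
    then have "a0' * (a 0 * (Y u - Y v)) \<in> M" by (rule id_mult[OF M])
    then show ?thesis using a0 by (simp add: mult.assoc[symmetric] mult.commute[of a0'])
  qed
  have B: "st (Suc u) (Suc v)" if "u \<ge> m" "v \<ge> m" "st u v" for u v
    unfolding st_def
  proof
    fix d assume d: "d \<in> {1..m}"
    show "Y (Suc u - d) - Y (Suc v - d) \<in> M"
    proof (cases "d = 1")
      case True then show ?thesis using A[OF that] by simp
    next
      case False
      then have "d - 1 \<in> {1..m}" "Suc u - d = u - (d - 1)" "Suc v - d = v - (d - 1)" using d by auto
      then show ?thesis using that(3) unfolding st_def by metis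
    qed
  qed
  have C: "st (u + t) (v + t)" if "u \<ge> m" "v \<ge> m" "st u v" for u v t
  proof (induction t)
    case 0 then show ?case using that by simp
  next
    case (Suc t) then show ?case using B[of "u + t" "v + t"] that by simp
  qed
  define cl where "cl x = (SOME r. r \<in> R \<and> x - r \<in> M)" for x :: 'a
  have cl: "cl x \<in> R" "x - cl x \<in> M" for x using cl_ex[OF R, of x] unfolding cl_def by auto
  have cleq: "x - y \<in> M" if "cl x = cl y" for x y
  proof -
    have "x - cl y \<in> M" using cl(2)[of x] that by simp
    then show ?thesis using id_trans[OF M _ id_swap[OF M cl(2)[of y]]] by blast
  qed
  define g where "g u = map (\<lambda>d. cl (Y (u - d))) [1..<Suc m]" for u
  define L where "L = {xs. set xs \<subseteq> R \<and> length xs = m}"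
  have "finite L" "card L = card R ^ m" unfolding L_def using R(1)
    by (simp_all add: finite_lists_length_eq card_lists_length_eq)
  have "\<exists>x\<in>{m..m + card R ^ m}. \<exists>y\<in>{m..m + card R ^ m}. x \<noteq> y \<and> g x = g y"
    by (rule pig_pair[OF \<open>finite L\<close>]) (use cl(1) \<open>card L = _\<close> in \<open>auto simp: g_def L_def\<close>)
  then obtain u1 u2 where u: "u1 \<in> {m..m + card R ^ m}" "u2 \<in> {m..m + card R ^ m}" "u1 < u2" "g u1 = g u2"
    by (metis linorder_neqE_nat)
  have gst: "st u1 u2" unfolding st_def
  proof
    fix d assume d: "d \<in> {1..m}"
    have gg: "g u1 ! (d - 1) = g u2 ! (d - 1)" using u(4) by simp
    have l: "d - 1 < length [1..<Suc m]" using d by auto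
    have n: "[1..<Suc m] ! (d - 1) = d" proof -
      have "1 + (d - 1) < Suc m" using d by auto
      then have "[1..<Suc m] ! (d - 1) = 1 + (d - 1)" by (rule nth_upt)
      then show ?thesis using d by simp
    qed
    have "g w ! (d - 1) = cl (Y (w - d))" for w unfolding g_def nth_map[OF l] n ..
    then show "Y (u1 - d) - Y (u2 - d) \<in> M" using cleq gg by metis
  qed
  define \<delta> where "\<delta> = u2 - u1"
  have "\<forall>j. Y (j + \<delta>) - Y j \<in> M"
  proof
    fix j
    define K where "K = u1 * N"
    have K: "u1 \<le> K" using N unfolding K_def by simp
    define t where "t = j + K - u1"
    have "Y (u1 + t) - Y (u2 + t) \<in> M" using A[OF _ _ C[OF _ _ gst]] u by auto
    moreover have "u1 + t = j + K" "u2 + t = (j + \<delta>) + K" using K u(3)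
      unfolding t_def \<delta>_def by linarith+
    ultimately have "Y j - Y (j + \<delta>) \<in> M" using per_mult[OF per] unfolding K_def by metis
    then show "Y (j + \<delta>) - Y j \<in> M" by (rule id_swap[OF M])
  qed
  moreover have "0 < \<delta>" "\<delta> \<le> card R ^ m" using u unfolding \<delta>_def by auto
  ultimately show ?thesis by blast
qed

lemma tshift:
  fixes l \<delta> k n :: nat
  assumes l: "prime l" and d: "0 < \<delta>" "\<delta> < l ^ Suc n"
  shows "\<exists>t. \<forall>j. (j + t * \<delta>) mod (k * l ^ Suc n) = (j + k * l ^ n) mod (k * l ^ Suc n)"
proof -
  obtain e w where ew: "\<delta> = l ^ e * w" "\<not> l dvd w" using ell_decomp[OF d(1) l] by blast
  have l1: "l > 1" using l prime_gt_1_nat by blast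
  have "w > 0" using ew d(1) by (cases w) auto
  then have "l ^ e \<le> \<delta>" using ew(1) by simp
  then have "l ^ e < l ^ Suc n" using d(2) by simp
  then have "e < Suc n" using l1 power_less_imp_less_exp by blast
  then have en: "e \<le> n" by simp
  have "coprime w l" using l ew(2) prime_imp_coprime coprime_commute by blast
  then obtain s where s: "[w * s = Suc 0] (mod l)" using cong_solve_coprime_nat by blast
  then have "(w * s) mod l = 1" using l1 unfolding cong_def by simp
  moreover have "(w * s) div l * l + (w * s) mod l = w * s" by (rule div_mult_mod_eq)
  ultimately have r: "w * s = 1 + l * ((w * s) div l)" by (simp add: mult.commute)
  define r where "r = (w * s) div l"
  have r: "w * s = 1 + l * r" using r unfolding r_def .
  define t where "t = k * l ^ (n - e) * s"
  have "t * \<delta> = k * (l ^ (n - e) * l ^ e) * (w * s)" unfolding t_def ew(1) by (simp add: ac_simps)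
  also have "l ^ (n - e) * l ^ e = l ^ n" using en by (simp add: power_add[symmetric])
  finally have "t * \<delta> = k * l ^ n * (w * s)" by (simp add: ac_simps)
  also have "\<dots> = k * l ^ n + (k * l ^ Suc n) * r" unfolding r by (simp add: algebra_simps)
  finally have td: "t * \<delta> = k * l ^ n + (k * l ^ Suc n) * r" .
  have "\<forall>j. (j + t * \<delta>) mod (k * l ^ Suc n) = (j + k * l ^ n) mod (k * l ^ Suc n)"
  proof
    fix j
    have "j + t * \<delta> = (j + k * l ^ n) + r * (k * l ^ Suc n)" unfolding td by (simp add: ac_simps)
    then show "(j + t * \<delta>) mod (k * l ^ Suc n) = (j + k * l ^ n) mod (k * l ^ Suc n)"
      using mod_mult_self1[of "j + k * l ^ n" r "k * l ^ Suc n"] by (simp only:)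
  qed
  then show ?thesis by blast
qed

lemma proj_set:
  fixes N l i :: nat
  assumes "N > 0" "i < N"
  shows "{j. j < l * N \<and> j mod N = i} = (\<lambda>c. i + c * N) ` {..<l}"
proof
  show "(\<lambda>c. i + c * N) ` {..<l} \<subseteq> {j. j < l * N \<and> j mod N = i}"
  proof
    fix j assume "j \<in> (\<lambda>c. i + c * N) ` {..<l}"
    then obtain c where c: "c < l" "j = i + c * N" by auto
    have "i + c * N < N + c * N" using assms by simp
    also have "\<dots> = Suc c * N" by simp
    also have "\<dots> \<le> l * N" using c(1) by (intro mult_le_mono1) simp
    finally show "j \<in> {j. j < l * N \<and> j mod N = i}" using c assms by simp
  qed
next
  show "{j. j < l * N \<and> j mod N = i} \<subseteq> (\<lambda>c. i + c * N) ` {..<l}"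
  proof
    fix j assume j: "j \<in> {j. j < l * N \<and> j mod N = i}"
    then have "j div N < l" using assms(1) by (simp add: div_less_iff_less_mult)
    moreover have "j = i + (j div N) * N" using j mod_div_mult_eq[of j N] by simp
    ultimately show "j \<in> (\<lambda>c. i + c * N) ` {..<l}" by blast
  qed
qed

lemma proj_in_M:
  fixes y :: "nat \<Rightarrow> 'a::comm_ring_1" and l N i :: nat
  assumes M: "is_ideal M" and lM: "(of_nat l :: 'a) \<in> M" and N: "N > 0" and i: "i < N"
    and sh: "\<forall>j. y ((j + N) mod (l * N)) - y (j mod (l * N)) \<in> M"
  shows "gr_proj (l * N) N y i \<in> M"
proof -
  define Y where "Y j = y (j mod (l * N))" for j
  have sh': "\<forall>j. Y (j + N) - Y j \<in> M" using sh unfolding Y_def by simp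
  have inj: "inj_on (\<lambda>c. i + c * N) {..<l}" using N by (auto simp: inj_on_def)
  have "gr_proj (l * N) N y i = (\<Sum>j\<in>{j. j < l * N \<and> j mod N = i}. y j)" unfolding gr_proj_def using i by simp
  also have "\<dots> = (\<Sum>c<l. y (i + c * N))" unfolding proj_set[OF N i] sum.reindex[OF inj] by simp
  also have "\<dots> = (\<Sum>c<l. Y (i + c * N))"
  proof (rule sum.cong)
    fix c assume "c \<in> {..<l}"
    then have "i + c * N \<in> {j. j < l * N \<and> j mod N = i}" unfolding proj_set[OF N i] by blast
    then show "y (i + c * N) = Y (i + c * N)" unfolding Y_def by simp
  qed simp
  also have "\<dots> = (\<Sum>c<l. Y (i + c * N) - Y i) + of_nat l * Y i" by (simp add: sum_subtractf)
  finally show ?thesis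
    using id_add[OF M id_sum[OF M shift_iter[OF M sh']] id_mult2[OF M lM]] by simp
qed

lemma level_shift:
  fixes y :: "nat \<Rightarrow> 'a::comm_ring_1" and l k n \<delta> :: nat
  assumes M: "is_ideal M" and l: "prime l" and d: "0 < \<delta>" "\<delta> < l ^ Suc n"
    and sh: "\<forall>j. y ((j + \<delta>) mod (k * l ^ Suc n)) - y (j mod (k * l ^ Suc n)) \<in> M"
  shows "\<forall>j. y ((j + k * l ^ n) mod (l * (k * l ^ n))) - y (j mod (l * (k * l ^ n))) \<in> M"
proof
  fix j
  have eq: "l * (k * l ^ n) = k * l ^ Suc n" by simp
  define Y where "Y j = y (j mod (k * l ^ Suc n))" for j
  have sh': "\<forall>j. Y (j + \<delta>) - Y j \<in> M" using sh unfolding Y_def by simp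
  obtain t where t: "\<forall>j. (j + t * \<delta>) mod (k * l ^ Suc n) = (j + k * l ^ n) mod (k * l ^ Suc n)"
    using tshift[OF l d] by blast
  have "Y (j + t * \<delta>) - Y j \<in> M" by (rule shift_iter[OF M sh'])
  then show "y ((j + k * l ^ n) mod (l * (k * l ^ n))) - y (j mod (l * (k * l ^ n))) \<in> M"
    unfolding eq Y_def using t by simp
qed

lemma idx: fixes N u d :: nat assumes "0 < N" "d \<le> u" shows "(N + u mod N - d mod N) mod N = (u - d) mod N"
proof -
  have "int ((N + u mod N - d mod N) mod N) = (int N + int u mod int N - int d mod int N) mod int N"
  proof -
    have "d mod N \<le> N + u mod N" using assms(1) by (simp add: less_imp_le_nat trans_le_add1)
    then have "int (N + u mod N - d mod N) = int N + int (u mod N) - int (d mod N)" by (simp add: of_nat_diff)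
    then show ?thesis by (simp add: zmod_int)
  qed
  also have "\<dots> = ((int u mod int N - int d mod int N) + int N) mod int N" by (simp add: algebra_simps)
  also have "\<dots> = (int u mod int N - int d mod int N) mod int N" by (rule mod_add_self2)
  also have "\<dots> = (int u - int d) mod int N" by (rule mod_diff_eq)
  also have "\<dots> = int ((u - d) mod N)" using assms by (simp add: zmod_int of_nat_diff)
  finally show ?thesis by simp
qed

lemma lev_pos: "k \<ge> 1 \<Longrightarrow> prime l \<Longrightarrow> lev k l n > 0"
  unfolding lev_def using prime_gt_0_nat by simp

lemma gam1: "k \<ge> 1 \<Longrightarrow> prime l \<Longrightarrow> gam_inv k l (frob_geom k l) n = 1 mod lev k l n"
proof -
  assume "k \<ge> 1" "prime l"
  then have N: "lev k l n > 0" by (rule lev_pos)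
  show ?thesis
  proof (cases "lev k l n = 1")
    case True then show ?thesis unfolding gam_inv_def frob_geom_def by simp
  next
    case False
    then have "lev k l n > 1" using N by simp
    then show ?thesis unfolding gam_inv_def frob_geom_def by simp
  qed
qed

lemma eval_form:
  "gr_eval N f (1 mod N) i = (\<Sum>d\<le>degree f. if i = d mod N then Polynomial.coeff f d else 0)"
  unfolding gr_eval_def gr_delta_def by (intro sum.cong refl) (simp add: mod_mult_right_eq)

lemma pti_form:
  assumes "k \<ge> 1" "prime l"
  shows "poly_to_iwasawa k l f n i = (\<Sum>d\<le>degree f. if i = d mod lev k l n then Polynomial.coeff f d else 0)"
  unfolding poly_to_iwasawa_def gam1[OF assms] eval_form ..

lemma zero_ideal_power: "0 \<in> ideal_power I (Suc n)"
  by (auto simp: ideal_prod_def ideal_gen_def is_ideal_def)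

lemma proj_eval:
  fixes f :: "'a::comm_ring_1 poly"
  assumes "N > 0" "N dvd N'" "i < N" "N' > 0"
  shows "gr_proj N' N (\<lambda>j. \<Sum>d\<le>degree f. if j = d mod N' then Polynomial.coeff f d else 0) i
       = (\<Sum>d\<le>degree f. if i = d mod N then Polynomial.coeff f d else 0)"
proof -
  define J where "J = {j. j < N' \<and> j mod N = i}"
  have fJ: "finite J" unfolding J_def by simp
  have N': "N' > 0" using assms(4) .
  have "gr_proj N' N (\<lambda>j. \<Sum>d\<le>degree f. if j = d mod N' then Polynomial.coeff f d else 0) i
      = (\<Sum>j\<in>J. \<Sum>d\<le>degree f. if j = d mod N' then Polynomial.coeff f d else 0)"
    unfolding gr_proj_def J_def using assms(3) by simp
  also have "\<dots> = (\<Sum>d\<le>degree f. \<Sum>j\<in>J. if j = d mod N' then Polynomial.coeff f d else 0)" by (rule sum.swap)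
  also have "\<dots> = (\<Sum>d\<le>degree f. if d mod N' \<in> J then Polynomial.coeff f d else 0)"
    by (simp add: sum.delta[OF fJ])
  also have "\<dots> = (\<Sum>d\<le>degree f. if i = d mod N then Polynomial.coeff f d else 0)"
  proof (rule sum.cong[OF refl])
    fix d
    have "(d mod N') mod N = d mod N" using assms(2) by (simp add: mod_mod_cancel)
    then show "(if d mod N' \<in> J then Polynomial.coeff f d else 0) = (if i = d mod N then Polynomial.coeff f d else 0)"
      unfolding J_def using N' by auto
  qed
  finally show ?thesis .
qed

lemma mul_eval:
  fixes f :: "'a::comm_ring_1 poly" and y :: "nat \<Rightarrow> 'a"
  assumes "N > 0" "i < N"
  shows "gr_mul N (\<lambda>j. \<Sum>d\<le>degree f. if j = d mod N then Polynomial.coeff f d else 0) y i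
       = (\<Sum>d\<le>degree f. Polynomial.coeff f d * y ((N + i - d mod N) mod N))"
proof -
  have "gr_mul N (\<lambda>j. \<Sum>d\<le>degree f. if j = d mod N then Polynomial.coeff f d else 0) y i
      = (\<Sum>j<N. (\<Sum>d\<le>degree f. if j = d mod N then Polynomial.coeff f d else 0) * y ((N + i - j) mod N))"
    unfolding gr_mul_def using assms by simp
  also have "\<dots> = (\<Sum>j<N. \<Sum>d\<le>degree f. if j = d mod N then Polynomial.coeff f d * y ((N + i - j) mod N) else 0)"
    by (auto simp: sum_distrib_right intro!: sum.cong)
  also have "\<dots> = (\<Sum>d\<le>degree f. \<Sum>j<N. if j = d mod N then Polynomial.coeff f d * y ((N + i - j) mod N) else 0)"
    by (rule sum.swap)
  also have "\<dots> = (\<Sum>d\<le>degree f. Polynomial.coeff f d * y ((N + i - d mod N) mod N))"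
    using assms(1) by (simp add: sum.delta' eq_commute[of _ "_ mod N"])
  finally show ?thesis .
qed

lemma exp_big: "prime (l::nat) \<Longrightarrow> Q < l ^ Q"
proof -
  assume "prime l"
  then have "2 \<le> l" using prime_ge_2_nat by blast
  then have "2 ^ Q \<le> l ^ Q" by (rule power_mono) simp
  moreover have "Q < 2 ^ Q" by simp
  ultimately show ?thesis by linarith
qed

theorem lemma8p5:
  fixes l k :: nat and f :: "'a::comm_ring_1 poly"
  assumes "prime l" and "k \<ge> 1" and "coprime k l"
    and "adic_ring TYPE('a)" and "zl_algebra l TYPE('a)"
    and "f \<in> P_set"
  shows "poly_to_iwasawa k l f \<in> S_set k l"
proof -
  note l = assms(1) and k = assms(2)
  define x where "x = poly_to_iwasawa k l f"
  have N: "lev k l n > 0" for n using lev_pos[OF k l] .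
  have x_eq: "x n = (\<lambda>i. \<Sum>d\<le>degree f. if i = d mod lev k l n then Polynomial.coeff f d else 0)" for n
    unfolding x_def by (rule ext, rule pti_form[OF k l])
  have dvdlev: "lev k l n dvd lev k l (Suc n)" for n unfolding lev_def by simp
  have xI: "x \<in> iwasawa k l"
    unfolding iwasawa_def
  proof (rule CollectI, rule allI, rule conjI)
    fix n
    have "x n i = 0" if "lev k l n \<le> i" for i
    proof -
      have "\<forall>d. i \<noteq> d mod lev k l n" using that N[of n] by (metis leD mod_less_divisor)
      then show ?thesis unfolding x_eq by simp
    qed
    then show "supported (lev k l n) (x n)" unfolding supported_def by blast
    show "\<forall>i<lev k l n. gr_proj (lev k l (Suc n)) (lev k l n) (x (Suc n)) i - x n i \<in> ideal_power jac (Suc n)"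
    proof (intro allI impI)
      fix i assume i: "i < lev k l n"
      have "gr_proj (lev k l (Suc n)) (lev k l n) (x (Suc n)) i = x n i"
        unfolding x_eq by (rule proj_eval[OF N dvdlev i N])
      then show "gr_proj (lev k l (Suc n)) (lev k l n) (x (Suc n)) i - x n i \<in> ideal_power jac (Suc n)"
        using zero_ideal_power by simp
    qed
  qed
  have main: "red_zero k l y" if y: "y \<in> red_iwasawa k l"
      and z: "red_zero k l (\<lambda>n. gr_mul (lev k l n) (x n) (y n))" for y
  proof -
    have good: "\<forall>n. \<forall>i<lev k l n. y n i \<in> M" if mx: "maximal_ideal M" for M
    proof -
      have M: "is_ideal M" using mx by (simp add: maximal_ideal_def)
      have jM: "jac \<subseteq> M" by (rule jac_sub[OF mx])
      have lM: "(of_nat l :: 'a) \<in> M" by (rule ell_in_M[OF l assms(4) assms(5) mx])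
      obtain R where R: "finite R" "\<forall>x. \<exists>r\<in>R. x - r \<in> M" using fin_res[OF assms(4) mx] by blast
      have "Polynomial.coeff f 0 dvd 1" using assms(6) by (simp add: P_set_def)
      then obtain a0' where "1 = Polynomial.coeff f 0 * a0'" by (rule dvdE)
      then have a0: "Polynomial.coeff f 0 * a0' = 1" by simp
      define m where "m = degree f"
      define Q where "Q = card R ^ m"
      have rec: "\<forall>u\<ge>m. (\<Sum>d\<le>m. Polynomial.coeff f d * y n ((u - d) mod lev k l n)) \<in> M" for n
      proof (intro allI impI)
        fix u assume u: "m \<le> u"
        let ?N = "lev k l n"
        have "gr_mul ?N (x n) (y n) (u mod ?N) \<in> jac" using z N[of n] unfolding red_zero_def by simp
        then have "gr_mul ?N (x n) (y n) (u mod ?N) \<in> M" using jM by blast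
        moreover have "gr_mul ?N (x n) (y n) (u mod ?N)
            = (\<Sum>d\<le>m. Polynomial.coeff f d * y n ((?N + u mod ?N - d mod ?N) mod ?N))"
          unfolding x_eq m_def by (rule mul_eval[OF N]) (simp add: N)
        moreover have "\<dots> = (\<Sum>d\<le>m. Polynomial.coeff f d * y n ((u - d) mod ?N))"
          using u idx[OF N] by (intro sum.cong refl) auto
        ultimately show "(\<Sum>d\<le>m. Polynomial.coeff f d * y n ((u - d) mod lev k l n)) \<in> M" by simp
      qed
      have levS: "lev k l (Suc n) = l * (k * l ^ n)" for n unfolding lev_def by simp
      have high: "\<forall>i<lev k l n. y n i \<in> M" if n: "Q \<le> n" for n
      proof (intro allI impI)
        fix i assume i: "i < lev k l n"
        define Y where "Y w = y (Suc n) (w mod lev k l (Suc n))" for w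
        have "\<exists>\<delta>. 0 < \<delta> \<and> \<delta> \<le> card R ^ m \<and> (\<forall>j. Y (j + \<delta>) - Y j \<in> M)"
        proof (rule core_shift[where a="Polynomial.coeff f" and Y=Y, OF M R a0 N[of "Suc n"]])
          show "\<forall>u. Y (u + lev k l (Suc n)) = Y u" unfolding Y_def by simp
          show "\<forall>u\<ge>m. (\<Sum>d\<le>m. Polynomial.coeff f d * Y (u - d)) \<in> M" unfolding Y_def by (rule rec)
        qed
        then obtain \<delta> where d: "0 < \<delta>" "\<delta> \<le> Q" "\<forall>j. Y (j + \<delta>) - Y j \<in> M" unfolding Q_def by blast
        have "Q < l ^ Q" by (rule exp_big[OF l])
        also have "\<dots> \<le> l ^ n" using n prime_gt_0_nat[OF l] by (intro power_increasing) auto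
        also have "\<dots> < l ^ Suc n" using prime_gt_1_nat[OF l] by simp
        finally have dl: "\<delta> < l ^ Suc n" using d(2) by simp
        have sh: "\<forall>j. y (Suc n) ((j + \<delta>) mod (k * l ^ Suc n)) - y (Suc n) (j mod (k * l ^ Suc n)) \<in> M"
          using d(3) unfolding Y_def lev_def .
        have "gr_proj (l * (k * l ^ n)) (k * l ^ n) (y (Suc n)) i \<in> M"
          by (rule proj_in_M[OF M lM _ _ level_shift[OF M l d(1) dl sh]])
             (use N[of n] i in \<open>simp_all add: lev_def\<close>)
        moreover have "gr_proj (lev k l (Suc n)) (lev k l n) (y (Suc n)) i - y n i \<in> M"
          using y i jM unfolding red_iwasawa_def by blast
        ultimately have "gr_proj (lev k l (Suc n)) (lev k l n) (y (Suc n)) i \<in> M"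
          "gr_proj (lev k l (Suc n)) (lev k l n) (y (Suc n)) i - y n i \<in> M"
          unfolding levS by (simp_all add: lev_def)
        then have "gr_proj (lev k l (Suc n)) (lev k l n) (y (Suc n)) i
            - (gr_proj (lev k l (Suc n)) (lev k l n) (y (Suc n)) i - y n i) \<in> M" by (rule id_diff[OF M])
        then show "y n i \<in> M" by simp
      qed
      have down: "\<forall>i<lev k l n. y n i \<in> M" if "\<forall>i<lev k l (Suc n). y (Suc n) i \<in> M" for n
      proof (intro allI impI)
        fix i assume i: "i < lev k l n"
        have "gr_proj (lev k l (Suc n)) (lev k l n) (y (Suc n)) i \<in> M"
          unfolding gr_proj_def using i that by (auto intro!: id_sum[OF M])
        moreover have "gr_proj (lev k l (Suc n)) (lev k l n) (y (Suc n)) i - y n i \<in> M"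
          using y i jM unfolding red_iwasawa_def by blast
        ultimately have "gr_proj (lev k l (Suc n)) (lev k l n) (y (Suc n)) i
            - (gr_proj (lev k l (Suc n)) (lev k l n) (y (Suc n)) i - y n i) \<in> M" by (rule id_diff[OF M])
        then show "y n i \<in> M" by simp
      qed
      have all: "\<forall>n. Q \<le> n + c \<longrightarrow> (\<forall>i<lev k l n. y n i \<in> M)" for c
      proof (induction c)
        case 0 then show ?case using high by simp
      next
        case (Suc c)
        show ?case
        proof (rule allI, rule impI)
          fix n assume "Q \<le> n + Suc c"
          then have "Q \<le> Suc n + c" by simp
          then show "\<forall>i<lev k l n. y n i \<in> M" using Suc down by blast
        qed
      qed
      show ?thesis using all[of Q] by simp
    qed
    show ?thesis unfolding red_zero_def jac_def using good by blast
  qed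
  show ?thesis unfolding S_set_def using xI main unfolding x_def by blast
qed

end
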